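(* Let $\varphi(z)=\frac{e^z-1}{z}$ for $z\neq 0$ and $\varphi(0)=1$. Let $\zeta<0$ and $\eta>0$ with $\eta\geq 2/|\zeta|$. Then for all $\lambda\leq 0$, $$\varphi(\eta\lambda)(\lambda+\zeta)\Bigl(1-\frac{\eta\lambda}{2}\varphi(\eta\lambda)\Bigr)\in\Bigl[\tfrac{3}{2}\zeta,\,0\Bigr].$$
   Context: The quantity $\varphi(\eta\lambda)(\lambda+\zeta)(1-\frac{\eta\lambda}{2}\varphi(\eta\lambda))$ is the coefficient of the "second-order averaged force" $f_{\eta,2}$ when the splitting $f_F(y)=\lambda y$, $f_S(y)=\zeta y$ is used. *)

theory Defs
  imports Complex_Main
begin

definition phi :: "real \<Rightarrow> real" where
  "phi z = (if z = 0 then 1 else (exp z - 1) / z)"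

end

theory Submission
  imports Defs
begin

lemma padeexp:
  fixes t :: real assumes "t \<ge> 0"
  shows "exp (-t) * (2 + t) \<ge> 2 - t"
proof -
  let ?f = "\<lambda>s::real. exp (-s) * (2 + s) - 2 + s"
  have "?f 0 \<le> ?f t"
  proof (rule DERIV_nonneg_imp_nondecreasing[OF assms])
    fix x :: real assume "0 \<le> x" "x \<le> t"
    have d: "DERIV ?f x :> (- exp (-x) * (2 + x) + exp (-x) + 1)"
      by (auto intro!: derivative_eq_intros)
    have "exp x \<ge> 1 + x" by (rule exp_ge_add_one_self)
    hence "exp (-x) * (1 + x) \<le> exp (-x) * exp x"
      by (intro mult_left_mono) auto
    moreover have "exp (-x) * exp x = 1" by (simp add: exp_minus field_simps)
    ultimately have "exp (-x) * (1 + x) \<le> 1" by linarith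
    hence "- exp (-x) * (2 + x) + exp (-x) + 1 \<ge> 0" by (simp add: algebra_simps)
    with d show "\<exists>y. DERIV ?f x :> y \<and> 0 \<le> y" by blast
  qed
  thus ?thesis by simp
qed

lemma key:
  fixes t :: real assumes "t \<ge> 0"
  shows "(1 - exp (-t)) * (3 - exp (-t)) * (t + 2) \<le> 6 * t"
proof -
  define u where "u = exp (-t)"
  have u0: "u > 0" unfolding u_def by simp
  have u1: "u \<le> 1" unfolding u_def using assms by simp
  have "(1 - u) * (3 - u) * (t + 2) \<le> 6 * t"
  proof (cases "t \<ge> 2")
    case True
    have "u * u \<le> u" using u0 u1 by (simp add: mult_left_le)
    hence "(1 - u) * (3 - u) \<le> 3" using u0 by (simp add: algebra_simps)
    hence "(1 - u) * (3 - u) * (t + 2) \<le> 3 * (t + 2)"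
      using assms by (intro mult_right_mono) auto
    moreover have "3 * (t + 2) \<le> 6 * t" using True by simp
    ultimately show ?thesis by (rule order.trans)
  next
    case False
    define L where "L = (2 - t) / (2 + t)"
    have uL: "u \<ge> L" using padeexp[OF assms] assms unfolding u_def L_def
      by (simp add: divide_le_eq algebra_simps)
    have L1: "L \<le> 1" unfolding L_def using assms by (simp add: divide_le_eq)
    have "(1 - u) * (3 - u) - (1 - L) * (3 - L) = (u - L) * (u + L - 4)"
      by (simp add: algebra_simps)
    also have "\<dots> \<le> 0" using uL u1 L1 by (intro mult_nonneg_nonpos) auto
    finally have w: "(1 - u) * (3 - u) \<le> (1 - L) * (3 - L)" by simp
    have "(1 - L) * (3 - L) * (t + 2) = 8 * t * (1 + t) / (2 + t)"
    proof -
      have p: "2 + t > 0" using assms by simp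
      have a: "1 - L = 2 * t / (2 + t)" unfolding L_def using p by (simp add: field_simps)
      have b: "3 - L = (4 + 4 * t) / (2 + t)" unfolding L_def using p by (simp add: field_simps)
      have g: "\<And>a b c::real. c \<noteq> 0 \<Longrightarrow> a / c * (b / c) * c = a * b / c"
        by (simp add: field_simps)
      have "t + 2 = 2 + t" by simp
      then show ?thesis unfolding a b using p g[of "2 + t" "2 * t" "4 + 4 * t"]
        by (simp add: algebra_simps)
    qed
    also have "\<dots> \<le> 6 * t" using assms False mult_left_mono[of t 2 t]
      by (simp add: divide_le_eq algebra_simps)
    finally show ?thesis using w assms
      by (smt (verit) mult_right_mono)
  qed
  thus ?thesis unfolding u_def .
qed

theorem theorem2p2:
  fixes zeta eta lam :: real
  assumes "zeta < 0" and "eta > 0" and "eta \<ge> 2 / \<bar>zeta\<bar>" and "lam \<le> 0"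
  shows "phi (eta * lam) * (lam + zeta) * (1 - eta * lam / 2 * phi (eta * lam))
           \<in> {3 / 2 * zeta .. 0}"
  proof (cases "lam = 0")
  case True
  then show ?thesis using assms(1) by (simp add: phi_def)
next
  case False
  hence lneg: "lam < 0" using assms(4) by simp
  define t where "t = - (eta * lam)"
  define z where "z = - zeta"
  define m where "m = - lam"
  have tpos: "t > 0" unfolding t_def using lneg assms(2) by (simp add: mult_pos_neg)
  have zpos: "z > 0" unfolding z_def using assms(1) by simp
  have mpos: "m > 0" unfolding m_def using lneg by simp
  define u where "u = exp (-t)"
  have u0: "u > 0" unfolding u_def by simp
  have u1: "u < 1" unfolding u_def using tpos by simp
  define q where "q = (1 - u) / t"
  have qpos: "q > 0" unfolding q_def using u1 tpos by simp
  have ph: "phi (eta * lam) = q"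
    unfolding phi_def q_def u_def t_def using tpos t_def
    by (auto simp: field_simps)
  have one: "1 - eta * lam / 2 * q = (3 - u) / 2"
  proof -
    have el: "eta * lam = - t" unfolding t_def by simp
    show ?thesis unfolding el q_def using tpos by (simp add: field_simps)
  qed
  have E: "phi (eta * lam) * (lam + zeta) * (1 - eta * lam / 2 * phi (eta * lam))
      = - (q * (m + z) * (3 - u) / 2)"
    unfolding ph one m_def z_def by (simp add: field_simps)
  have nn: "q * (m + z) * (3 - u) \<ge> 0" using qpos mpos zpos u1 by simp
  have "\<bar>zeta\<bar> = z" unfolding z_def using assms(1) by simp
  hence "2 / z \<le> eta" using assms(3) by simp
  hence "eta * z \<ge> 2" using zpos by (simp add: pos_divide_le_eq)
  have mt: "m * eta = t" unfolding m_def t_def by simp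
  have "2 * m \<le> t * z"
  proof -
    have "2 * m \<le> eta * z * m" using \<open>eta * z \<ge> 2\<close> mpos by (simp add: mult_right_mono)
    also have "\<dots> = t * z" using mt by (simp add: algebra_simps)
    finally show ?thesis .
  qed
  hence mz: "m + z \<le> z * (t + 2) / 2" by (simp add: algebra_simps)
  have k: "(1 - u) * (3 - u) * (t + 2) \<le> 6 * t" using key[of t] tpos unfolding u_def by simp
  have "q * (m + z) * (3 - u) \<le> q * (z * (t + 2) / 2) * (3 - u)"
    using mz qpos u1 by (intro mult_right_mono mult_left_mono) auto
  also have "\<dots> = z / (2 * t) * ((1 - u) * (3 - u) * (t + 2))"
    unfolding q_def using tpos by (simp add: field_simps)
  also have "\<dots> \<le> z / (2 * t) * (6 * t)"
    using k zpos tpos by (intro mult_left_mono) auto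
  also have "\<dots> = 3 * z" using tpos by (simp add: field_simps)
  finally have le: "q * (m + z) * (3 - u) \<le> 3 * z" .
  show ?thesis unfolding E using nn le z_def by simp
qed
end
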